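(* For $p\ge2$, $\dfrac{1+z_p}{2}\ge\dfrac{p}{p+2}$, equivalently $\dfrac{1+z_p}{1-z_p}\ge\dfrac p2$.
   Context: For $p=\alpha(\alpha+1)$, $\alpha>0$, $L_\alpha$ is the solution on $(-1,1)$ of $(1-s^2)y''-2sy'+py=0$ bounded near $1$ with $L_\alpha(1)=1$, and $z_p$ is its largest zero in $(-1,1)$ (for $p=2$, $L_1(s)=s$, $z_2=0$). *)

theory Defs
  imports "HOL-Analysis.Analysis"
begin

definition is_Legendre :: "real \<Rightarrow> (real \<Rightarrow> real) \<Rightarrow> bool" where
  "is_Legendre \<alpha> y \<longleftrightarrow>
     (\<forall>s\<in>{-1<..<1}. y differentiable at s \<and> deriv y differentiable at s \<and>
        (1 - s\<^sup>2) * deriv (deriv y) s - 2 * s * deriv y s + \<alpha> * (\<alpha> + 1) * y s = 0)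
     \<and> (\<exists>\<delta>>0. \<exists>M. \<forall>s\<in>{1-\<delta><..<1}. \<bar>y s\<bar> \<le> M)
     \<and> (y \<longlongrightarrow> 1) (at_left 1)"

definition is_largest_zero :: "(real \<Rightarrow> real) \<Rightarrow> real \<Rightarrow> bool" where
  "is_largest_zero y z \<longleftrightarrow> z \<in> {-1<..<1} \<and> y z = 0 \<and>
     (\<forall>w\<in>{-1<..<1}. y w = 0 \<longrightarrow> w \<le> z)"

end

theory Submission
  imports Defs
begin

lemma log_blowup:
  fixes f f' :: "real \<Rightarrow> real"
  assumes "a < 1" "K > 0"
    and der: "\<And>t. t \<in> {a<..<1} \<Longrightarrow> (f has_real_derivative f' t) (at t)"
    and le: "\<And>t. t \<in> {a<..<1} \<Longrightarrow> f' t \<le> - K / (1 - t)"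
    and bd: "\<And>t. t \<in> {a<..<1} \<Longrightarrow> f t \<ge> B"
  shows False
proof -
  define t0 where "t0 = (a + 1) / 2"
  have t0: "a < t0" "t0 < 1" using assms(1) by (auto simp: t0_def)
  define x where "x = (f t0 - B + 1) / K"
  have x: "x > 0" using bd[of t0] t0 assms(2) by (auto simp: x_def)
  define t where "t = 1 - (1 - t0) * exp (- x)"
  have e: "exp (- x) < 1" using x by simp
  have "(1 - t0) * exp (- x) < (1 - t0) * 1" using t0 e by (intro mult_strict_left_mono) auto
  moreover have "(1 - t0) * exp (- x) > 0" using t0 by simp
  ultimately have t: "t0 < t" "t < 1" unfolding t_def by auto
  define h where "h s = f s - K * ln (1 - s)" for s
  have hd: "(h has_real_derivative (f' s + K / (1 - s))) (at s)" if "s \<in> {a<..<1}" for s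
  proof -
    have "(h has_real_derivative (f' s - K * (- 1 / (1 - s)))) (at s)"
      unfolding h_def using that der[OF that]
      by (auto intro!: derivative_eq_intros)
    then show ?thesis by simp
  qed
  have "h t0 \<ge> h t"
  proof (rule DERIV_nonpos_imp_decreasing_open[of t0 t h])
    show "t0 \<le> t" using t by simp
    show "\<exists>y. (h has_real_derivative y) (at s) \<and> y \<le> 0" if "t0 < s" "s < t" for s
      using hd[of s] le[of s] that t t0 by (intro exI[of _ "f' s + K / (1 - s)"]) auto
    show "continuous_on {t0..t} h"
      proof (intro continuous_at_imp_continuous_on ballI)
      fix s assume "s \<in> {t0..t}"
      then have "s \<in> {a<..<1}" using t t0 by auto
      from DERIV_isCont[OF hd[OF this]] show "isCont h s" .
    qed
  qed
  moreover have "ln (1 - t) = ln (1 - t0) - x"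
    using t0 by (simp add: t_def ln_mult)
  ultimately have "f t \<le> f t0 - K * x" unfolding h_def by (simp add: algebra_simps)
  also have "\<dots> = B - 1" using assms(2) by (simp add: x_def)
  finally show False using bd[of t] t t0 by auto
qed

lemma pos_case:
  fixes \<alpha> p c :: real and y :: "real \<Rightarrow> real"
  assumes p2: "p > 2" and pdef: "p = \<alpha> * (\<alpha> + 1)" and L: "is_Legendre \<alpha> y"
    and cdef: "c = (p - 2) / (p + 2)" and pos: "\<And>s. s \<in> {c..<1} \<Longrightarrow> y s > 0"
  shows False
proof -
  define d1 where "d1 = deriv y"
  define d2 where "d2 = deriv d1"
  have c0: "0 < c" "c < 1" using p2 by (auto simp: cdef field_simps)
  have ode: "\<And>s. s \<in> {-1<..<1} \<Longrightarrow> (y has_real_derivative d1 s) (at s) \<and>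
      (d1 has_real_derivative d2 s) (at s) \<and> (1 - s\<^sup>2) * d2 s - 2 * s * d1 s + p * y s = 0"
    using L unfolding is_Legendre_def d1_def d2_def pdef
    by (auto simp: DERIV_deriv_iff_real_differentiable)
  have lim: "(y \<longlongrightarrow> 1) (at_left 1)" using L unfolding is_Legendre_def by auto
  define G where "G t = (1 - t\<^sup>2) * (t - c)\<^sup>2 * d1 t / y t" for t
  define E where "E t = (- 2 * t) * (t - c)\<^sup>2 * d1 t / y t + (1 - t\<^sup>2) * (2 * (t - c)) * d1 t / y t
     + (1 - t\<^sup>2) * (t - c)\<^sup>2 * (d2 t * y t - d1 t * d1 t) / (y t)\<^sup>2" for t
  define Q where "Q t = (t - t^3 / 3 - p * (t - c)^3 / 3) - (c - c^3/3)" for t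
  have Gd: "(G has_real_derivative E t) (at t)" if "t \<in> {c..<1}" for t
  proof -
    have t: "t \<in> {-1<..<1}" using that c0 by auto
    have yt: "y t \<noteq> 0" using pos[OF that] by simp
    show ?thesis unfolding G_def E_def using ode[OF t] yt
      by (auto intro!: derivative_eq_intros simp: field_simps power2_eq_square)
  qed
  have EF: "E t \<le> (1 - t\<^sup>2) - p * (t - c)\<^sup>2" if "t \<in> {c..<1}" for t
  proof -
    have t: "t \<in> {-1<..<1}" using that c0 by auto
    have yt: "y t > 0" using pos[OF that] by simp
    define r where "r = d1 t / y t"
    have o: "(1 - t\<^sup>2) * d2 t = 2 * t * d1 t - p * y t" using ode[OF t] by linarith
    have Ee: "E t = - p * (t - c)\<^sup>2 + (1 - t\<^sup>2) * (2 * ((t - c) * r) - ((t - c) * r)\<^sup>2)"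
    proof -
      have e1: "E t = -2 * t * (t - c)\<^sup>2 * r + (1 - t\<^sup>2) * (2 * (t - c)) * r
          + (t - c)\<^sup>2 * ((1 - t\<^sup>2) * d2 t / y t) - (1 - t\<^sup>2) * ((t - c) * r)\<^sup>2"
        using yt unfolding E_def r_def by (simp add: field_simps power2_eq_square)
      have e2: "(1 - t\<^sup>2) * d2 t / y t = 2 * t * r - p"
        using yt unfolding o r_def by (simp add: field_simps)
      show ?thesis unfolding e1 e2 by (simp add: algebra_simps power2_eq_square)
    qed
    moreover have X: "2 * ((t - c) * r) - ((t - c) * r)\<^sup>2 \<le> 1"
    proof -
      have "0 \<le> ((t - c) * r - 1)\<^sup>2" by simp
      then show ?thesis unfolding power2_diff by simp
    qed
    moreover have "1 - t\<^sup>2 \<ge> 0" using t by (auto simp: abs_square_le_1 abs_le_iff)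
    ultimately have "(1 - t\<^sup>2) * (2 * ((t - c) * r) - ((t - c) * r)\<^sup>2) \<le> (1 - t\<^sup>2) * 1"
      by (intro mult_left_mono) auto
    with Ee show ?thesis by simp
  qed
  have GQ: "G t \<le> Q t" if "t \<in> {c..<1}" for t
  proof -
    define H where "H s = G s - Q s" for s
    have Hd: "(H has_real_derivative (E s - ((1 - s\<^sup>2) - p * (s - c)\<^sup>2))) (at s)" if "s \<in> {c..<1}" for s
    proof -
      have "(Q has_real_derivative (1 - 3 * s\<^sup>2 / 3 - p * (3 * (s - c)\<^sup>2) / 3)) (at s)"
        unfolding Q_def by (auto intro!: derivative_eq_intros simp: power2_eq_square)
      then have "(Q has_real_derivative ((1 - s\<^sup>2) - p * (s - c)\<^sup>2)) (at s)" by simp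
      then show ?thesis unfolding H_def using Gd[OF that] by (auto intro!: derivative_eq_intros)
    qed
    have "H t \<le> H c"
    proof (rule DERIV_nonpos_imp_decreasing_open[of c t H])
      show "c \<le> t" using that by simp
      show "\<exists>y. (H has_real_derivative y) (at s) \<and> y \<le> 0" if "c < s" "s < t" for s
        using Hd[of s] EF[of s] that \<open>t \<in> {c..<1}\<close> by (intro exI[of _ "E s - ((1 - s\<^sup>2) - p * (s - c)\<^sup>2)"]) auto
      show "continuous_on {c..t} H"
      proof (intro continuous_at_imp_continuous_on ballI)
        fix s assume "s \<in> {c..t}"
        then have "s \<in> {c..<1}" using that by auto
        from DERIV_isCont[OF Hd[OF this]] show "isCont H s" .
      qed
    qed
    moreover have "H c = 0" unfolding H_def G_def Q_def by simp
    ultimately show ?thesis unfolding H_def by simp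
  qed
  define Q1 where "Q1 = Q 1"
  have Q1: "Q1 < 0"
  proof -
    have "Q1 = (1 - c)\<^sup>2 * ((2 + c) - p * (1 - c)) / 3"
      unfolding Q1_def Q_def by (simp add: field_simps power2_eq_square power3_eq_cube)
    moreover have "(2 + c) - p * (1 - c) = (2 - p) / (p + 2)"
    proof -
      have hc: "c * (p + 2) = p - 2" using p2 by (simp add: cdef)
      have "((2 + c) - p * (1 - c)) * (p + 2) = 2 * p + 4 + c * (p + 2) - p * p - 2 * p + p * (c * (p + 2))"
        by (simp add: algebra_simps)
      also have "\<dots> = 2 - p" unfolding hc by (simp add: algebra_simps)
      finally show ?thesis using p2 by (simp add: eq_divide_eq)
    qed
    moreover have "(2 - p) / (p + 2) < 0" using p2 by (simp add: divide_neg_pos)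
    moreover have "(1 - c)\<^sup>2 > 0" using c0 by simp
    ultimately have "Q1 = (1 - c)\<^sup>2 * ((2 - p) / (p + 2)) / 3" "(1 - c)\<^sup>2 * ((2 - p) / (p + 2)) < 0"
      by (simp_all only: mult_pos_neg)
    then show ?thesis by (metis divide_neg_pos zero_less_numeral)
  qed
  have "((\<lambda>t. Q t) \<longlongrightarrow> Q1) (at_left 1)"
    unfolding Q1_def Q_def by (intro tendsto_intros) auto
  then have ev1: "eventually (\<lambda>t. Q t < Q1 / 2) (at_left 1)"
    using Q1 by (intro order_tendstoD) auto
  have ev2: "eventually (\<lambda>t. y t > 1/2) (at_left 1)"
    using lim by (intro order_tendstoD) auto
  have ev3: "eventually (\<lambda>t. t \<in> {c<..<1}) (at_left 1)"
    using c0 by (intro eventually_at_left_real) 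
  have "eventually (\<lambda>t. Q t < Q1 / 2 \<and> y t > 1/2 \<and> t \<in> {c<..<1}) (at_left 1)"
    using ev1 ev2 ev3 by eventually_elim auto
  then obtain b where b: "b < 1" "\<And>t. b < t \<Longrightarrow> t < 1 \<Longrightarrow> Q t < Q1 / 2 \<and> y t > 1/2 \<and> t \<in> {c<..<1}"
    unfolding eventually_at_left_field by auto
  define K0 where "K0 = - Q1 / 2"
  have K0: "K0 > 0" using Q1 by (simp add: K0_def)
  show False
  proof (rule log_blowup[of b "K0 / 4" y d1 0])
    show "b < 1" "K0 / 4 > 0" using b K0 by auto
    fix t assume t: "t \<in> {b<..<1}"
    then have bt: "Q t < Q1 / 2" "y t > 1/2" "t \<in> {c<..<1}" using b(2)[of t] by auto
    then have t1: "t \<in> {-1<..<1}" "t \<in> {c..<1}" using c0 by auto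
    show "(y has_real_derivative d1 t) (at t)" using ode[OF t1(1)] by simp
    show "y t \<ge> 0" using bt by simp
    define A where "A = (1 - t\<^sup>2) * (t - c)\<^sup>2"
    have A: "A > 0" using bt c0 unfolding A_def by (auto simp: abs_square_less_1)
    have "G t < - K0" using GQ[OF t1(2)] bt unfolding K0_def by linarith
    then have "A * d1 t / y t < - K0" unfolding G_def A_def .
    then have "A * d1 t < - K0 * y t" using bt by (simp add: divide_less_eq)
    then have d: "d1 t < - K0 * y t / A" using A by (simp add: field_simps)
    have "A \<le> (1 - t) * 2" 
    proof -
      have "(t - c)\<^sup>2 \<le> 1" using bt c0 by (auto simp: abs_square_le_1)
      moreover have "1 - t\<^sup>2 = (1 - t) * (1 + t)" by (simp add: power2_eq_square algebra_simps)
      moreover have "1 + t \<le> 2" "1 - t > 0" using bt by auto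
      moreover have "1 - t\<^sup>2 \<ge> 0" using bt c0 by (auto simp: abs_square_le_1 abs_le_iff)
      ultimately have "A \<le> (1 - t\<^sup>2) * 1" unfolding A_def
        by (intro mult_left_mono) auto
      then have "A \<le> (1 - t) * (1 + t) * 1" using \<open>1 - t\<^sup>2 = (1 - t) * (1 + t)\<close> by simp
      also have "\<dots> \<le> (1 - t) * 2" using \<open>1 + t \<le> 2\<close> \<open>1 - t > 0\<close> by (simp only: mult_1_right) (rule mult_left_mono, auto)
      finally show ?thesis .
    qed
    then have "K0 / 4 / (1 - t) \<le> K0 * y t / A"
    proof -
      have "A \<le> (1 - t) * 2 * 1" using \<open>A \<le> (1 - t) * 2\<close> by simp
      also have "\<dots> \<le> (1 - t) * 2 * (2 * y t)" using bt
        by (intro mult_left_mono) auto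
      also have "\<dots> = 4 * (1 - t) * y t" by (simp add: algebra_simps)
      finally have A4: "A \<le> 4 * (1 - t) * y t" .
      have "K0 * y t / (4 * (1 - t) * y t) \<le> K0 * y t / A"
        using A A4 K0 bt by (intro divide_left_mono) auto
      moreover have "K0 * y t / (4 * (1 - t) * y t) = K0 / 4 / (1 - t)" using bt by simp
      ultimately show ?thesis by simp
    qed
    with d show "d1 t \<le> - (K0 / 4) / (1 - t)" by simp
  qed
qed

lemma p2_case:
  fixes y :: "real \<Rightarrow> real"
  assumes L: "is_Legendre 1 y"
  shows "y 0 = 0"
proof -
  define d1 where "d1 = deriv y"
  define d2 where "d2 = deriv d1"
  have ode: "\<And>s. s \<in> {-1<..<1} \<Longrightarrow> (y has_real_derivative d1 s) (at s) \<and>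
      (d1 has_real_derivative d2 s) (at s) \<and> (1 - s\<^sup>2) * d2 s - 2 * s * d1 s + 2 * y s = 0"
    using L unfolding is_Legendre_def d1_def d2_def
    by (auto simp: DERIV_deriv_iff_real_differentiable)
  have lim: "(y \<longlongrightarrow> 1) (at_left 1)" using L unfolding is_Legendre_def by auto
  define W where "W s = (1 - s\<^sup>2) * (s * d1 s - y s)" for s
  have Wd: "(W has_real_derivative 0) (at s)" if "s \<in> {-1<..<1}" for s
  proof -
    have D: "(W has_real_derivative (-2 * s * (s * d1 s - y s) + (1 - s\<^sup>2) * (d1 s + s * d2 s - d1 s))) (at s)"
      unfolding W_def using ode[OF that]
      by (auto intro!: derivative_eq_intros simp: power2_eq_square)
    have "-2 * s * (s * d1 s - y s) + (1 - s\<^sup>2) * (d1 s + s * d2 s - d1 s)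
        = s * ((1 - s\<^sup>2) * d2 s - 2 * s * d1 s + 2 * y s)"
      by (simp add: algebra_simps power2_eq_square)
    also have "\<dots> = 0" using ode[OF that] by simp
    finally have e0: "-2 * s * (s * d1 s - y s) + (1 - s\<^sup>2) * (d1 s + s * d2 s - d1 s) = 0" .
    show ?thesis using D unfolding e0 .
  qed
  obtain C where C: "\<And>s. s \<in> {-1<..<1} \<Longrightarrow> W s = C"
    using has_field_derivative_zero_constant[of "{-1<..<1::real}" W] Wd
    by (auto simp: at_within_open[OF _ open_greaterThanLessThan])
  define g where "g s = y s / s" for s
  have gd: "(g has_real_derivative (C / (s\<^sup>2 * (1 - s\<^sup>2)))) (at s)" if "s \<in> {0<..<1}" for s
  proof -
    have s: "s \<in> {-1<..<1}" using that by auto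
    have "(g has_real_derivative ((d1 s * s - y s * 1) / (s * s))) (at s)"
      unfolding g_def using ode[OF s] that by (auto intro!: derivative_eq_intros)
    moreover have "(d1 s * s - y s * 1) / (s * s) = C / (s\<^sup>2 * (1 - s\<^sup>2))"
    proof -
      have "1 - s\<^sup>2 > 0" using that by (auto simp: abs_square_less_1)
      then have "s * d1 s - y s = C / (1 - s\<^sup>2)" using C[OF s] unfolding W_def
        by (simp add: field_simps)
      then have "(d1 s * s - y s * 1) / (s * s) = (C / (1 - s\<^sup>2)) / (s * s)"
        by (simp add: mult.commute)
      then show ?thesis by (simp add: power2_eq_square mult.commute)
    qed
    ultimately show ?thesis by simp
  qed
  have glim: "(g \<longlongrightarrow> 1) (at_left 1)"
    unfolding g_def using tendsto_divide[OF lim tendsto_ident_at[of 1 "{..<1}"]] by simp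
  have ev: "eventually (\<lambda>s. g s < 2 \<and> g s > 0 \<and> s \<in> {0<..<1}) (at_left 1)"
  proof -
    have "eventually (\<lambda>s. g s < 2) (at_left 1)" "eventually (\<lambda>s. g s > 0) (at_left 1)"
      using glim by (auto intro: order_tendstoD)
    moreover have "eventually (\<lambda>s. s \<in> {0<..<1}) (at_left (1::real))"
      by (intro eventually_at_left_real) simp
    ultimately show ?thesis by eventually_elim auto
  qed
  then obtain b where b: "b < 1" "\<And>s. b < s \<Longrightarrow> s < 1 \<Longrightarrow> g s < 2 \<and> g s > 0 \<and> s \<in> {0<..<1}"
    unfolding eventually_at_left_field by auto
  have bnd: "1 / (s\<^sup>2 * (1 - s\<^sup>2)) \<ge> 1 / (2 * (1 - s))" if "s \<in> {0<..<1}" for s :: real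
  proof -
    have s1: "\<bar>s\<bar> < 1" "s \<noteq> 0" using that by auto
    then have "s\<^sup>2 < 1" by (simp add: abs_square_less_1)
    then have a: "1 - s\<^sup>2 > 0" "s\<^sup>2 \<le> 1" "s\<^sup>2 > 0" using s1 by auto
    have "s\<^sup>2 * (1 - s\<^sup>2) \<le> 1 * (1 - s\<^sup>2)" using a by (intro mult_right_mono) auto
    also have "\<dots> = (1 - s) * (1 + s)" by (simp add: algebra_simps power2_eq_square)
    also have "\<dots> \<le> (1 - s) * 2" using that by (intro mult_left_mono) auto
    finally have le: "s\<^sup>2 * (1 - s\<^sup>2) \<le> 2 * (1 - s)" by simp
    have "1 / (2 * (1 - s)) \<le> 1 / (s\<^sup>2 * (1 - s\<^sup>2))"
    proof (rule divide_left_mono)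
      show "s\<^sup>2 * (1 - s\<^sup>2) \<le> 2 * (1 - s)" by (rule le)
      have "s\<^sup>2 * (1 - s\<^sup>2) > 0" using a by simp
      moreover have "2 * (1 - s) > 0" using that by simp
      ultimately show "0 < 2 * (1 - s) * (s\<^sup>2 * (1 - s\<^sup>2))" by (rule mult_pos_pos[rotated])
    qed simp
    then show ?thesis by simp
  qed
  have C0: "C = 0"
  proof (rule ccontr)
    assume "C \<noteq> 0"
    then consider "C > 0" | "C < 0" by linarith
    then show False
    proof cases
      case 1
      show False
      proof (rule log_blowup[of b "C / 2" "\<lambda>s. - g s" "\<lambda>s. - (C / (s\<^sup>2 * (1 - s\<^sup>2)))" "-2"])
        show "b < 1" "C / 2 > 0" using b 1 by auto
        fix t assume t: "t \<in> {b<..<1}"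
        then have t01: "t \<in> {0<..<1}" "g t < 2" using b(2)[of t] by auto
        show "((\<lambda>s. - g s) has_real_derivative - (C / (t\<^sup>2 * (1 - t\<^sup>2)))) (at t)"
          using gd[OF t01(1)] by (auto intro!: derivative_eq_intros)
        show "- 2 \<le> - g t" using t01 by simp
        have "C * (1 / (2 * (1 - t))) \<le> C * (1 / (t\<^sup>2 * (1 - t\<^sup>2)))"
          using bnd[OF t01(1)] 1 by (intro mult_left_mono) auto
        then show "- (C / (t\<^sup>2 * (1 - t\<^sup>2))) \<le> - (C / 2) / (1 - t)"
          by simp
      qed
    next
      case 2
      show False
      proof (rule log_blowup[of b "- C / 2" g "\<lambda>s. C / (s\<^sup>2 * (1 - s\<^sup>2))" 0])
        show "b < 1" "- C / 2 > 0" using b 2 by auto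
        fix t assume t: "t \<in> {b<..<1}"
        then have t01: "t \<in> {0<..<1}" "g t > 0" using b(2)[of t] by auto
        show "(g has_real_derivative (C / (t\<^sup>2 * (1 - t\<^sup>2)))) (at t)"
          using gd[OF t01(1)] by simp
        show "0 \<le> g t" using t01 by simp
        have "C * (1 / (t\<^sup>2 * (1 - t\<^sup>2))) \<le> C * (1 / (2 * (1 - t)))"
          using bnd[OF t01(1)] 2 by (intro mult_left_mono_neg) auto
        then show "C / (t\<^sup>2 * (1 - t\<^sup>2)) \<le> - (- C / 2) / (1 - t)"
          by simp
      qed
    qed
  qed
  obtain k where k: "\<And>s. s \<in> {0<..<1} \<Longrightarrow> g s = k"
    using has_field_derivative_zero_constant[of "{0<..<1::real}" g] gd C0
    by (auto simp: at_within_open[OF _ open_greaterThanLessThan])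
  have "eventually (\<lambda>s. s \<in> {0<..<1}) (at_left (1::real))" by (rule eventually_at_left_real) simp
  then have "eventually (\<lambda>s. g s = k) (at_left (1::real))"
    by eventually_elim (use k in auto)
  then have "(g \<longlongrightarrow> k) (at_left 1)" by (rule tendsto_eventually)
  then have k1: "k = 1" using glim by (intro tendsto_unique[OF trivial_limit_at_left_real]) 
  have "eventually (\<lambda>s. s \<in> {0<..<1}) (at_right (0::real))" by (rule eventually_at_right_real) simp
  then have "eventually (\<lambda>s. s = y s) (at_right (0::real))"
    by eventually_elim (use k k1 in \<open>auto simp: g_def\<close>)
  then have "(y \<longlongrightarrow> 0) (at_right 0)" by (rule Lim_transform_eventually[OF tendsto_ident_at])
  moreover have "(y \<longlongrightarrow> y 0) (at_right 0)"
    using ode[of 0] by (intro tendsto_within_subset[OF DERIV_isCont[unfolded isCont_def]]) auto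
  ultimately show ?thesis using tendsto_unique[OF trivial_limit_at_right_real] by metis
qed

theorem lemma5p6:
  fixes \<alpha> p z :: real and L :: "real \<Rightarrow> real"
  assumes "\<alpha> > 0" and "p = \<alpha> * (\<alpha> + 1)" and "p \<ge> 2"
    and "is_Legendre \<alpha> L" and "is_largest_zero L z"
  shows "(1 + z) / 2 \<ge> p / (p + 2) \<and> (1 + z) / (1 - z) \<ge> p / 2"
proof -
  define c where "c = (p - 2) / (p + 2)"
  have c0: "0 \<le> c" "c < 1" using assms(3) by (auto simp: c_def field_simps)
  have ex: "\<exists>w\<in>{c..<1}. L w = 0"
  proof (cases "p = 2")
    case True
    then have "(\<alpha> - 1) * (\<alpha> + 2) = 0" using assms(2) by (simp add: algebra_simps)
    then have "\<alpha> = 1" using assms(1) by auto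
    then have "L 0 = 0" using p2_case assms(4) by simp
    moreover have "c = 0" using True by (simp add: c_def)
    ultimately show ?thesis by auto
  next
    case False
    then have p2: "p > 2" using assms(3) by simp
    show ?thesis
    proof (rule ccontr)
      assume nz: "\<not> ?thesis"
      have cont: "isCont L s" if "s \<in> {-1<..<1}" for s
        using assms(4) that unfolding is_Legendre_def
        by (auto intro: differentiable_imp_continuous_within)
      have lim: "(L \<longlongrightarrow> 1) (at_left 1)" using assms(4) unfolding is_Legendre_def by auto
      have "L s > 0" if s: "s \<in> {c..<1}" for s
      proof (rule ccontr)
        assume "\<not> L s > 0"
        then have Ls: "L s \<le> 0" by simp
        have "eventually (\<lambda>t. L t > 0) (at_left 1)" using lim by (intro order_tendstoD) auto
        moreover have "eventually (\<lambda>t. t \<in> {s<..<1}) (at_left (1::real))"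
          using s by (intro eventually_at_left_real) auto
        ultimately have "eventually (\<lambda>t. L t > 0 \<and> t \<in> {s<..<1}) (at_left (1::real))"
          by eventually_elim auto
        then obtain t where t: "L t > 0" "t \<in> {s<..<1}"
          using eventually_happens'[of "at_left (1::real)"] by auto
        have "continuous_on {s..t} L"
          using t s c0 by (intro continuous_at_imp_continuous_on ballI cont) auto
        then obtain x where "x \<in> {s..t}" "L x = 0"
          using IVT'[of L s 0 t] Ls t by auto
        then show False using nz s t by auto
      qed
      then show False using pos_case[OF p2 assms(2) assms(4) c_def] by blast
    qed
  qed
  then obtain w where w: "w \<in> {c..<1}" "L w = 0" by blast
  have z: "z \<in> {-1<..<1}" "\<forall>v\<in>{-1<..<1}. L v = 0 \<longrightarrow> v \<le> z"
    using assms(5) unfolding is_largest_zero_def by auto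
  have "w \<le> z" using z(2) w c0 by auto
  then have cz: "c \<le> z" using w by auto
  then have cz': "(p - 2) \<le> z * (p + 2)" using assms(3) by (simp add: c_def divide_le_eq)
  have "p / (p + 2) \<le> (1 + z) / 2"
    using cz' assms(3) by (simp add: divide_simps) (simp add: algebra_simps)
  moreover have "p / 2 \<le> (1 + z) / (1 - z)"
    using cz' z(1) by (simp add: divide_simps) (simp add: algebra_simps)
  ultimately show ?thesis by simp
qed

end
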